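(* Let $n\in\mathbb{N}$ and suppose $0<y_{\ell}<1$ and $0<q_{\ell}<1$ for all $1\le\ell\le n$. Then the function \[ F(x)=\prod_{\ell=1}^{n}\frac{\exp\left(\frac{x^{2}}{\log q_{\ell}^{4}}\right)}{\left(y_{\ell}e^{ix};q_{\ell}\right)_{\infty}},\qquad x\in\mathbb{R}, \] is a positive definite function. Furthermore, for all $m\in\mathbb{N}$ and all $x_{1},\dots,x_{m}\in\mathbb{R}$, the matrices \[ \left(\prod_{\ell=1}^{n}\frac{\exp\left(\frac{(x_{j}-x_{k})^{2}}{\log q_{\ell}^{4}}\right)}{\left(y_{\ell}e^{i(x_{j}-x_{k})};q_{\ell}\right)_{\infty}}\right)_{j,k=1}^{m} \] are positive semidefinite. In particular, \[ \prod_{\ell=1}^{n}\frac{\left(y_{\ell};q_{\ell}\right)_{\infty}}{\left|\left(y_{\ell}e^{ix};q_{\ell}\right)_{\infty}\right|}\exp\left(\frac{x^{2}}{\log q_{\ell}^{4}}\right)\le1,\qquad x\in\mathbb{R}. \]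
   Context: For $0<q<1$ and $a\in\mathbb{C}$, $(a;q)_{\infty}=\prod_{k=0}^{\infty}(1-aq^{k})$. Here $\log q^{4}=4\log q$. A continuous function $f:\mathbb{R}\to\mathbb{C}$ with $f(0)>0$ is called positive definite if for every $n\in\mathbb{N}$ and all $x_{1},\dots,x_{n}\in\mathbb{R}$ the matrix $(f(x_{j}-x_{k}))_{j,k=1}^{n}$ is positive semidefinite, i.e. $\sum_{j,k}f(x_j-x_k)z_j\overline{z_k}\ge0$ for all $z_1,\dots,z_n\in\mathbb{C}$ (equivalently, by Bochner's theorem, $f$ is the Fourier transform of a finite positive measure on $\mathbb{R}$ of total mass $f(0)$). *)

theory Defs
  imports "HOL-Analysis.Analysis"
begin

definition qpoch_inf :: "complex \<Rightarrow> real \<Rightarrow> complex" where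
  "qpoch_inf a q = (\<Prod>k. 1 - a * complex_of_real q ^ k)"

definition positive_definite :: "(real \<Rightarrow> complex) \<Rightarrow> bool" where
  "positive_definite f \<longleftrightarrow> continuous_on UNIV f \<and> Im (f 0) = 0 \<and> Re (f 0) > 0 \<and>
     (\<forall>(m::nat) (xs::nat \<Rightarrow> real) (z::nat \<Rightarrow> complex).
        (\<Sum>j<m. \<Sum>k<m. f (xs j - xs k) * z j * cnj (z k)) \<in> \<real> \<and>
        Re (\<Sum>j<m. \<Sum>k<m. f (xs j - xs k) * z j * cnj (z k)) \<ge> 0)"

end

theory Submission
  imports Defs "HOL-Real_Asymp.Real_Asymp"
begin


lemma qp_conv:
  fixes a :: complex and q :: real
  assumes "0 < q" "q < 1"
  shows "convergent_prod (\<lambda>k. 1 - a * complex_of_real q ^ k)"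
proof -
  have "summable (\<lambda>k. norm a * q ^ k)"
    using assms by (intro summable_mult summable_geometric) auto
  then have "summable (\<lambda>k. norm ((1 - a * complex_of_real q ^ k) - 1))"
    using assms by (simp add: norm_mult norm_power)
  then show ?thesis
    by (intro abs_convergent_prod_imp_convergent_prod summable_imp_abs_convergent_prod)
qed

lemma qp_lim:
  fixes a :: complex and q :: real
  assumes "0 < q" "q < 1"
  shows "(\<lambda>n. \<Prod>k<n. 1 - a * complex_of_real q ^ k) \<longlonglongrightarrow> qpoch_inf a q"
proof -
  have "(\<lambda>n. \<Prod>k\<le>n. 1 - a * complex_of_real q ^ k) \<longlonglongrightarrow> qpoch_inf a q"
    unfolding qpoch_inf_def by (rule convergent_prod_LIMSEQ[OF qp_conv[OF assms]])
  then have "(\<lambda>n. \<Prod>k<Suc n. 1 - a * complex_of_real q ^ k) \<longlonglongrightarrow> qpoch_inf a q"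
    by (simp add: lessThan_Suc_atMost)
  then show ?thesis by (rule LIMSEQ_imp_Suc)
qed

lemma qp_nonzero:
  fixes a :: complex and q :: real
  assumes "0 < q" "q < 1" "norm a < 1"
  shows "qpoch_inf a q \<noteq> 0"
  unfolding qpoch_inf_def
proof (rule prodinf_nonzero[OF qp_conv[OF assms(1,2)]])
  fix i
  have "norm (a * complex_of_real q ^ i) = norm a * q ^ i" using assms by (simp add: norm_mult norm_power)
  also have "\<dots> < 1"
  proof -
    have "q ^ i \<le> 1" using assms by (simp add: power_le_one)
    then have "norm a * q ^ i \<le> norm a * 1" by (intro mult_left_mono) auto
    then show ?thesis using assms by linarith
  qed
  finally show "1 - a * complex_of_real q ^ i \<noteq> 0" by auto
qed

lemma qp_cont:
  fixes q :: real
  assumes "0 < q" "q < 1"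
  shows "continuous_on (cball 0 1) (\<lambda>w. qpoch_inf w q)"
proof -
  have "uniformly_convergent_on (cball 0 1) (\<lambda>N w. \<Prod>n<N. 1 - w * complex_of_real q ^ n)"
  proof (rule uniformly_convergent_on_prod')
    show "uniformly_convergent_on (cball 0 1) (\<lambda>N w. \<Sum>n<N. norm ((1 - w * complex_of_real q ^ n) - 1))"
    proof (rule Weierstrass_m_test'[where M="\<lambda>n. q^n"])
      fix n and w :: complex assume "w \<in> cball 0 1"
      then have "norm w \<le> 1" by auto
      then show "norm (norm ((1 - w * complex_of_real q ^ n) - 1)) \<le> q ^ n"
        using assms by (simp add: norm_mult norm_power mult_left_le_one_le)
    next
      show "summable (\<lambda>n. q^n)" using assms by (intro summable_geometric) auto
    qed
  qed (auto intro!: continuous_intros)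
  then obtain l where l: "uniform_limit (cball 0 1) (\<lambda>N w. \<Prod>n<N. 1 - w * complex_of_real q ^ n) l sequentially"
    unfolding uniformly_convergent_on_def by blast
  have "continuous_on (cball 0 1) l"
    by (rule uniform_limit_theorem[OF _ l]) (auto intro!: always_eventually continuous_intros)
  moreover have "l w = qpoch_inf w q" if "w \<in> cball 0 1" for w
    using LIMSEQ_unique[OF tendsto_uniform_limitI[OF l that] qp_lim[OF assms]] .
  ultimately show ?thesis using continuous_on_cong[of "cball 0 1" "cball 0 1" l "\<lambda>w. qpoch_inf w q"] by simp
qed



definition QF :: "(real \<Rightarrow> complex) \<Rightarrow> nat \<Rightarrow> (nat \<Rightarrow> real) \<Rightarrow> (nat \<Rightarrow> complex) \<Rightarrow> complex" where
  "QF f m xs z = (\<Sum>j<m. \<Sum>k<m. f (xs j - xs k) * z j * cnj (z k))"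

definition PDQ :: "(real \<Rightarrow> complex) \<Rightarrow> bool" where
  "PDQ f \<longleftrightarrow> (\<forall>m xs z. QF f m xs z \<in> \<real> \<and> Re (QF f m xs z) \<ge> 0)"

definition Mult :: "(real \<Rightarrow> complex) \<Rightarrow> bool" where
  "Mult h \<longleftrightarrow> (\<forall>g. PDQ g \<longrightarrow> PDQ (\<lambda>x. h x * g x))"

lemma PDQ_one: "PDQ (\<lambda>_. 1)"
proof -
  have "QF (\<lambda>_. 1) m xs z = complex_of_real ((cmod (\<Sum>j<m. z j))^2)" for m xs z
  proof -
    have "QF (\<lambda>_. 1) m xs z = (\<Sum>j<m. z j) * cnj (\<Sum>k<m. z k)"
      by (simp add: QF_def sum_product cnj_sum)
    also have "\<dots> = complex_of_real ((cmod (\<Sum>j<m. z j))^2)"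
      by (rule complex_norm_square[symmetric])
    finally show ?thesis .
  qed
  then show ?thesis unfolding PDQ_def by simp
qed

lemma Mult_one: "Mult (\<lambda>_. 1)"
  unfolding Mult_def by simp

lemma Mult_cis: "Mult (\<lambda>x. cis (t * x))"
  unfolding Mult_def PDQ_def
proof (intro allI impI conjI)
  fix g m xs z assume H: "\<forall>m xs z. QF g m xs z \<in> \<real> \<and> 0 \<le> Re (QF g m xs z)"
  have "QF (\<lambda>x. cis (t * x) * g x) m xs z = QF g m xs (\<lambda>j. z j * cis (t * xs j))"
    unfolding QF_def
    by (intro sum.cong refl) (simp add: cis_cnj cis_mult right_diff_distrib mult_ac)
  then show "QF (\<lambda>x. cis (t * x) * g x) m xs z \<in> \<real>" "0 \<le> Re (QF (\<lambda>x. cis (t * x) * g x) m xs z)"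
    using H by auto
qed

lemma QF_add: "QF (\<lambda>x. f x + g x) m xs z = QF f m xs z + QF g m xs z"
  unfolding QF_def by (simp add: distrib_right sum.distrib)

lemma QF_scale: "QF (\<lambda>x. c * f x) m xs z = c * QF f m xs z"
  unfolding QF_def by (simp add: sum_distrib_left mult_ac)

lemma QF_zero: "QF (\<lambda>x. 0) m xs z = 0"
  unfolding QF_def by simp

lemma Mult_add: "Mult h1 \<Longrightarrow> Mult h2 \<Longrightarrow> Mult (\<lambda>x. h1 x + h2 x)"
  unfolding Mult_def PDQ_def by (simp add: distrib_right QF_add)

lemma Mult_scale: "Mult h \<Longrightarrow> 0 \<le> c \<Longrightarrow> Mult (\<lambda>x. complex_of_real c * h x)"
  unfolding Mult_def PDQ_def
proof (intro allI impI conjI)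
  fix g m xs z assume "\<forall>g. (\<forall>m xs z. QF g m xs z \<in> \<real> \<and> 0 \<le> Re (QF g m xs z)) \<longrightarrow>
         (\<forall>m xs z. QF (\<lambda>x. h x * g x) m xs z \<in> \<real> \<and> 0 \<le> Re (QF (\<lambda>x. h x * g x) m xs z))"
    and "\<forall>m xs z. QF g m xs z \<in> \<real> \<and> 0 \<le> Re (QF g m xs z)" and c: "0 \<le> c"
  then have H: "QF (\<lambda>x. h x * g x) m xs z \<in> \<real>" "0 \<le> Re (QF (\<lambda>x. h x * g x) m xs z)" by auto
  have e: "QF (\<lambda>x. complex_of_real c * h x * g x) m xs z = complex_of_real c * QF (\<lambda>x. h x * g x) m xs z"
    using QF_scale[of c "\<lambda>x. h x * g x"] by (simp add: mult_ac)
  show "QF (\<lambda>x. complex_of_real c * h x * g x) m xs z \<in> \<real>" unfolding e using H by auto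
  show "0 \<le> Re (QF (\<lambda>x. complex_of_real c * h x * g x) m xs z)" unfolding e using H c by auto
qed

lemma Mult_mult: "Mult h1 \<Longrightarrow> Mult h2 \<Longrightarrow> Mult (\<lambda>x. h1 x * h2 x)"
  unfolding Mult_def
proof (intro allI impI)
  fix g assume "\<forall>g. PDQ g \<longrightarrow> PDQ (\<lambda>x. h1 x * g x)" "\<forall>g. PDQ g \<longrightarrow> PDQ (\<lambda>x. h2 x * g x)" "PDQ g"
  then have "PDQ (\<lambda>x. h1 x * (h2 x * g x))" by blast
  then show "PDQ (\<lambda>x. h1 x * h2 x * g x)" by (simp add: mult.assoc)
qed

lemma Mult_sum: "finite I \<Longrightarrow> (\<And>i. i \<in> I \<Longrightarrow> Mult (f i)) \<Longrightarrow> Mult (\<lambda>x. \<Sum>i\<in>I. f i x)"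
proof (induction I rule: finite_induct)
  case empty
  then show ?case unfolding Mult_def PDQ_def by (simp add: QF_zero)
next
  case (insert a F)
  then show ?case by (simp add: Mult_add)
qed

lemma Mult_prod: "finite I \<Longrightarrow> (\<And>i. i \<in> I \<Longrightarrow> Mult (f i)) \<Longrightarrow> Mult (\<lambda>x. \<Prod>i\<in>I. f i x)"
proof (induction I rule: finite_induct)
  case empty
  then show ?case by (simp add: Mult_one)
next
  case (insert a F)
  then show ?case by (simp add: Mult_mult)
qed

lemma Mult_power: "Mult h \<Longrightarrow> Mult (\<lambda>x. h x ^ N)"
  by (induction N) (simp_all add: Mult_one Mult_mult)

lemma PDQ_lim:
  assumes "\<And>x. (\<lambda>N. gN N x) \<longlonglongrightarrow> g x" "\<And>N. PDQ (gN N)"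
  shows "PDQ g"
  unfolding PDQ_def
proof (intro allI conjI)
  fix m xs z
  have t: "(\<lambda>N. QF (gN N) m xs z) \<longlonglongrightarrow> QF g m xs z"
    unfolding QF_def by (intro tendsto_intros assms)
  have ev: "\<forall>\<^sub>F N in sequentially. QF (gN N) m xs z \<in> \<real>"
    using assms(2) unfolding PDQ_def by auto
  show "QF g m xs z \<in> \<real>"
    by (rule Lim_in_closed_set[OF closed_complex_Reals ev _ t]) auto
  have "(\<lambda>N. Re (QF (gN N) m xs z)) \<longlonglongrightarrow> Re (QF g m xs z)"
    by (intro tendsto_intros t)
  then show "0 \<le> Re (QF g m xs z)"
    by (rule LIMSEQ_le_const) (use assms(2) in \<open>auto simp: PDQ_def\<close>)
qed

lemma Mult_lim:
  assumes "\<And>x. (\<lambda>N. hN N x) \<longlonglongrightarrow> h x" "\<And>N. Mult (hN N)"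
  shows "Mult h"
  unfolding Mult_def
proof (intro allI impI)
  fix g assume "PDQ g"
  show "PDQ (\<lambda>x. h x * g x)"
    by (rule PDQ_lim[where gN="\<lambda>N x. hN N x * g x"])
       (use assms \<open>PDQ g\<close> in \<open>auto intro!: tendsto_intros simp: Mult_def\<close>)
qed

lemma Mult_geom:
  assumes "0 \<le> b" "b < 1"
  shows "Mult (\<lambda>x. 1 / (1 - complex_of_real b * cis x))"
proof (rule Mult_lim[where hN="\<lambda>N x. \<Sum>j<N. complex_of_real (b^j) * cis (real j * x)"])
  fix x
  have "norm (complex_of_real b * cis x) < 1" using assms by (simp add: norm_mult)
  from geometric_sums[OF this] show "(\<lambda>N. \<Sum>j<N. complex_of_real (b^j) * cis (real j * x)) \<longlonglongrightarrow> 1 / (1 - complex_of_real b * cis x)"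
    by (simp add: sums_def power_mult_distrib Complex.DeMoivre)
next
  fix N show "Mult (\<lambda>x. \<Sum>j<N. complex_of_real (b^j) * cis (real j * x))"
    using assms by (intro Mult_sum Mult_scale Mult_cis) auto
qed

lemma Mult_cos: "Mult (\<lambda>x. complex_of_real (cos (t * x)))"
proof -
  have "Mult (\<lambda>x. complex_of_real (1/2) * cis (t * x) + complex_of_real (1/2) * cis ((-t) * x))"
    by (intro Mult_add Mult_scale Mult_cis) auto
  moreover have "complex_of_real (1/2) * cis (t * x) + complex_of_real (1/2) * cis ((-t) * x) = complex_of_real (cos (t * x))" for x
    by (simp add: complex_eq_iff)
  ultimately show ?thesis by simp
qed



lemma cos_pow_lim: "((\<lambda>N::nat. cos (d / sqrt (real N)) ^ N) \<longlongrightarrow> exp (-(d*d/2))) at_top"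
  by real_asymp

lemma Mult_gauss: "Mult (\<lambda>x. complex_of_real (exp (-((c*x)*(c*x)/2))))"
proof (rule Mult_lim[where hN="\<lambda>N x. complex_of_real (cos ((c / sqrt (real N)) * x)) ^ N"])
  fix x
  have "(\<lambda>N::nat. cos ((c*x) / sqrt (real N)) ^ N) \<longlonglongrightarrow> exp (-((c*x)*(c*x)/2))"
    by (rule cos_pow_lim)
  then have tl: "(\<lambda>N::nat. complex_of_real (cos ((c*x) / sqrt (real N)) ^ N)) \<longlonglongrightarrow> complex_of_real (exp (-((c*x)*(c*x)/2)))"
    by (rule tendsto_of_real)
  have eq: "complex_of_real (cos ((c / sqrt (real N)) * x)) ^ N = complex_of_real (cos ((c*x) / sqrt (real N)) ^ N)" for N
  proof -
    have "(c / sqrt (real N)) * x = (c*x) / sqrt (real N)" by simp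
    then show ?thesis by (simp only: of_real_power)
  qed
  show "(\<lambda>N. complex_of_real (cos ((c / sqrt (real N)) * x)) ^ N) \<longlonglongrightarrow> complex_of_real (exp (-((c*x)*(c*x)/2)))"
    by (simp only: eq) (rule tl)
next
  fix N show "Mult (\<lambda>x. complex_of_real (cos ((c / sqrt (real N)) * x)) ^ N)"
    by (intro Mult_power Mult_cos)
qed

lemma Mult_qp:
  assumes "0 \<le> y" "y < 1" "0 < q" "q < 1"
  shows "Mult (\<lambda>x. 1 / qpoch_inf (complex_of_real y * cis x) q)"
proof (rule Mult_lim[where hN="\<lambda>N x. \<Prod>k<N. 1 / (1 - complex_of_real (y * q^k) * cis x)"])
  fix x
  have nz: "qpoch_inf (complex_of_real y * cis x) q \<noteq> 0"
    using assms by (intro qp_nonzero) (auto simp: norm_mult)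
  have "(\<lambda>N. 1 / (\<Prod>k<N. 1 - complex_of_real y * cis x * complex_of_real q ^ k)) \<longlonglongrightarrow> 1 / qpoch_inf (complex_of_real y * cis x) q"
    by (intro tendsto_intros qp_lim assms nz)
  moreover have "(\<Prod>k<N. 1 / (1 - complex_of_real (y * q^k) * cis x)) = 1 / (\<Prod>k<N. 1 - complex_of_real y * cis x * complex_of_real q ^ k)" for N
    by (simp add: prod_dividef mult_ac)
  ultimately show "(\<lambda>N. \<Prod>k<N. 1 / (1 - complex_of_real (y * q^k) * cis x)) \<longlonglongrightarrow> 1 / qpoch_inf (complex_of_real y * cis x) q"
    by simp
next
  fix N
  have "y * q^k < 1" for k
  proof -
    have "q^k \<le> 1" using assms by (simp add: power_le_one)
    then have "y * q^k \<le> y * 1" using assms by (intro mult_left_mono) auto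
    then show ?thesis using assms by linarith
  qed
  then show "Mult (\<lambda>x. \<Prod>k<N. 1 / (1 - complex_of_real (y * q^k) * cis x))"
    using assms by (intro Mult_prod Mult_geom) auto
qed

lemma qp_real:
  assumes "0 \<le> y" "y < 1" "0 < q" "q < 1"
  shows "Im (qpoch_inf (complex_of_real y) q) = 0"
    "0 < Re (qpoch_inf (complex_of_real y) q)"
    "Re (qpoch_inf (complex_of_real y) q) \<le> cmod (qpoch_inf (complex_of_real y * cis x) q)"
proof -
  let ?L = "qpoch_inf (complex_of_real y) q"
  have yq: "y * q^k \<le> 1" for k
    using assms by (simp add: mult_le_one power_le_one)
  have P: "(\<Prod>k<n. 1 - complex_of_real y * complex_of_real q ^ k) = complex_of_real (\<Prod>k<n. 1 - y * q^k)" for n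
    by simp
  have P1: "Re (\<Prod>k<n. 1 - complex_of_real y * complex_of_real q ^ k) = (\<Prod>k<n. 1 - y * q^k)" for n
    by (subst P) (rule Re_complex_of_real)
  have P2: "Im (\<Prod>k<n. 1 - complex_of_real y * complex_of_real q ^ k) = 0" for n
    by (subst P) (rule Im_complex_of_real)
  have t: "(\<lambda>n. \<Prod>k<n. 1 - complex_of_real y * complex_of_real q ^ k) \<longlonglongrightarrow> ?L"
    by (rule qp_lim) (use assms in auto)
  have "(\<lambda>n. Im (\<Prod>k<n. 1 - complex_of_real y * complex_of_real q ^ k)) \<longlonglongrightarrow> Im ?L"
    by (intro tendsto_intros t)
  then have "(\<lambda>n. 0) \<longlonglongrightarrow> Im ?L" by (simp only: P2)
  then show "Im ?L = 0" by (simp add: LIMSEQ_const_iff)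
  have tr: "(\<lambda>n. Re (\<Prod>k<n. 1 - complex_of_real y * complex_of_real q ^ k)) \<longlonglongrightarrow> Re ?L"
    by (intro tendsto_intros t)
  have ge: "0 \<le> Re ?L"
  proof (rule LIMSEQ_le_const[OF tr], rule exI, intro allI impI)
    fix n
    have "0 \<le> (\<Prod>k<n. 1 - y * q^k)" using yq by (intro prod_nonneg) (simp add: algebra_simps)
    then show "0 \<le> Re (\<Prod>k<n. 1 - complex_of_real y * complex_of_real q ^ k)" by (simp only: P1)
  qed
  have "?L \<noteq> 0" using assms by (intro qp_nonzero) auto
  with ge \<open>Im ?L = 0\<close> show "0 < Re ?L" by (simp add: complex_eq_iff less_le)
  have t2: "(\<lambda>n. cmod (\<Prod>k<n. 1 - complex_of_real y * cis x * complex_of_real q ^ k)) \<longlonglongrightarrow> cmod (qpoch_inf (complex_of_real y * cis x) q)"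
    by (intro tendsto_intros qp_lim) (use assms in auto)
  show "Re ?L \<le> cmod (qpoch_inf (complex_of_real y * cis x) q)"
  proof (rule LIMSEQ_le[OF tr t2], rule exI, intro allI impI)
    fix n
    have "Re (\<Prod>k<n. 1 - complex_of_real y * complex_of_real q ^ k) = (\<Prod>k<n. 1 - y * q^k)"
      by (simp only: P1)
    also have "\<dots> \<le> (\<Prod>k<n. cmod (1 - complex_of_real y * cis x * complex_of_real q ^ k))"
    proof (rule prod_mono, rule conjI)
      fix k
      show "0 \<le> 1 - y * q^k" using yq[of k] by simp
      have "cmod (complex_of_real y * cis x * complex_of_real q ^ k) = y * q^k"
        using assms by (simp add: norm_mult norm_power)
      then show "1 - y * q^k \<le> cmod (1 - complex_of_real y * cis x * complex_of_real q ^ k)"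
        by (metis norm_one norm_triangle_ineq2)
    qed
    also have "\<dots> = cmod (\<Prod>k<n. 1 - complex_of_real y * cis x * complex_of_real q ^ k)"
      by (simp add: prod_norm)
    finally show "Re (\<Prod>k<n. 1 - complex_of_real y * complex_of_real q ^ k) \<le> cmod (\<Prod>k<n. 1 - complex_of_real y * cis x * complex_of_real q ^ k)" .
  qed
qed



theorem theorem2p1:
  fixes n :: nat and y q :: "nat \<Rightarrow> real"
  assumes hy: "\<And>l. 1 \<le> l \<Longrightarrow> l \<le> n \<Longrightarrow> 0 < y l \<and> y l < 1"
      and hq: "\<And>l. 1 \<le> l \<Longrightarrow> l \<le> n \<Longrightarrow> 0 < q l \<and> q l < 1"
  defines "F \<equiv> (\<lambda>x::real. \<Prod>l=1..n.
      complex_of_real (exp (x\<^sup>2 / (4 * ln (q l))))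
        / qpoch_inf (complex_of_real (y l) * cis x) (q l))"
  shows "positive_definite F \<and>
         (\<forall>(m::nat) (xs::nat \<Rightarrow> real) (z::nat \<Rightarrow> complex).
           (\<Sum>j<m. \<Sum>k<m. F (xs j - xs k) * z j * cnj (z k)) \<in> \<real> \<and>
           Re (\<Sum>j<m. \<Sum>k<m. F (xs j - xs k) * z j * cnj (z k)) \<ge> 0) \<and>
         (\<forall>x::real. (\<Prod>l=1..n.
           Re (qpoch_inf (complex_of_real (y l)) (q l))
             / cmod (qpoch_inf (complex_of_real (y l) * cis x) (q l))
             * exp (x\<^sup>2 / (4 * ln (q l)))) \<le> 1)"
proof -
  have yl: "0 < y l" "y l < 1" and ql: "0 < q l" "q l < 1" if "l \<in> {1..n}" for l
    using hy hq that by auto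
  have gauss: "exp (x\<^sup>2 / (4 * ln (q l))) = exp (-((sqrt (-1 / (2 * ln (q l))) * x) * (sqrt (-1 / (2 * ln (q l))) * x) / 2))"
    if "l \<in> {1..n}" for l x
  proof -
    have lq: "ln (q l) < 0" using ql[OF that] by simp
    have "sqrt (-1 / (2 * ln (q l))) * sqrt (-1 / (2 * ln (q l))) = -1 / (2 * ln (q l))"
    proof -
      have "0 \<le> -1 / (2 * ln (q l))" using lq by (intro divide_nonpos_neg) auto
      then show ?thesis by simp
    qed
    then have "(sqrt (-1 / (2 * ln (q l))) * x) * (sqrt (-1 / (2 * ln (q l))) * x) / 2 = -1 / (2 * ln (q l)) * x\<^sup>2 / 2"
      by (simp add: power2_eq_square mult_ac)
    also have "\<dots> = - (x\<^sup>2 / (4 * ln (q l)))" using lq by (simp add: field_simps)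
    finally show ?thesis by simp
  qed
  have nz: "qpoch_inf (complex_of_real (y l) * cis x) (q l) \<noteq> 0" if "l \<in> {1..n}" for l x
    using yl[OF that] ql[OF that] by (intro qp_nonzero) (auto simp: norm_mult)
  have lnz: "ln (q l) \<noteq> 0" if "l \<in> {1..n}" for l
    using ql[OF that] by simp
  have MF: "Mult F"
  proof -
    have "Mult (\<lambda>x. \<Prod>l\<in>{1..n}. complex_of_real (exp (-((sqrt (-1 / (2 * ln (q l))) * x) * (sqrt (-1 / (2 * ln (q l))) * x) / 2)))
         * (1 / qpoch_inf (complex_of_real (y l) * cis x) (q l)))"
      using yl ql by (intro Mult_prod Mult_mult Mult_gauss Mult_qp) (auto simp: less_imp_le)
    moreover have "F = (\<lambda>x. \<Prod>l\<in>{1..n}. complex_of_real (exp (-((sqrt (-1 / (2 * ln (q l))) * x) * (sqrt (-1 / (2 * ln (q l))) * x) / 2)))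
         * (1 / qpoch_inf (complex_of_real (y l) * cis x) (q l)))"
      unfolding F_def by (intro ext prod.cong refl) (simp only: gauss times_divide_eq_right mult_1_right)
    ultimately show ?thesis by simp
  qed
  have "PDQ (\<lambda>x. F x * 1)"
    using MF PDQ_one unfolding Mult_def by blast
  then have PF: "PDQ F" by simp
  then have QFF: "\<forall>(m::nat) (xs::nat \<Rightarrow> real) (z::nat \<Rightarrow> complex).
           (\<Sum>j<m. \<Sum>k<m. F (xs j - xs k) * z j * cnj (z k)) \<in> \<real> \<and>
           Re (\<Sum>j<m. \<Sum>k<m. F (xs j - xs k) * z j * cnj (z k)) \<ge> 0"
    unfolding PDQ_def QF_def by blast
  have cont: "continuous_on UNIV F"
  proof -
    have cq: "continuous_on UNIV (\<lambda>x. qpoch_inf (complex_of_real (y l) * cis x) (q l))" if "l \<in> {1..n}" for l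
    proof (rule continuous_on_compose2[OF qp_cont[OF ql[OF that]]])
      show "continuous_on UNIV (\<lambda>x. complex_of_real (y l) * cis x)"
        by (intro continuous_intros)
      show "(\<lambda>x. complex_of_real (y l) * cis x) ` UNIV \<subseteq> cball 0 1"
        using yl[OF that] by (auto simp: norm_mult)
    qed
    show ?thesis unfolding F_def
      by (intro continuous_on_prod continuous_on_divide continuous_intros cq nz) (auto simp: nz lnz)
  qed
  define r where "r l = Re (qpoch_inf (complex_of_real (y l)) (q l))" for l
  have r: "qpoch_inf (complex_of_real (y l)) (q l) = complex_of_real (r l)" "0 < r l"
     "r l \<le> cmod (qpoch_inf (complex_of_real (y l) * cis x) (q l))" if "l \<in> {1..n}" for l x
    using qp_real(1,2)[of "y l" "q l"] qp_real(3)[of "y l" "q l" x] yl[OF that] ql[OF that] unfolding r_def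
    by (auto simp: complex_eq_iff)
  have F0: "F 0 = complex_of_real (\<Prod>l\<in>{1..n}. 1 / r l)"
    unfolding F_def by (simp add: r)
  have F0pos: "0 < (\<Prod>l\<in>{1..n}. 1 / r l)"
    using r(2) by (intro prod_pos) auto
  have PD: "positive_definite F"
  proof -
    have "Im (F 0) = 0" "0 < Re (F 0)" using F0pos by (simp_all only: F0 Re_complex_of_real Im_complex_of_real)
    then show ?thesis unfolding positive_definite_def using cont QFF by blast
  qed
  have ineq: "(\<Prod>l=1..n.
           Re (qpoch_inf (complex_of_real (y l)) (q l))
             / cmod (qpoch_inf (complex_of_real (y l) * cis x) (q l))
             * exp (x\<^sup>2 / (4 * ln (q l)))) \<le> 1" for x
  proof (rule prod_le_1, rule conjI)
    fix l assume l: "l \<in> {1..n}"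
    have lq: "ln (q l) < 0" using ql[OF l] by simp
    have e1: "exp (x\<^sup>2 / (4 * ln (q l))) \<le> 1"
      using lq by (simp add: divide_nonneg_neg)
    have a: "0 \<le> r l / cmod (qpoch_inf (complex_of_real (y l) * cis x) (q l))"
      using r(2)[OF l] by simp
    have b: "r l / cmod (qpoch_inf (complex_of_real (y l) * cis x) (q l)) \<le> 1"
      using r(2)[OF l] r(3)[OF l, of x] by (simp add: divide_le_eq_1)
    show "0 \<le> Re (qpoch_inf (complex_of_real (y l)) (q l)) / cmod (qpoch_inf (complex_of_real (y l) * cis x) (q l)) * exp (x\<^sup>2 / (4 * ln (q l)))"
      using a unfolding r_def by (intro mult_nonneg_nonneg) auto
    show "Re (qpoch_inf (complex_of_real (y l)) (q l)) / cmod (qpoch_inf (complex_of_real (y l) * cis x) (q l)) * exp (x\<^sup>2 / (4 * ln (q l))) \<le> 1"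
      using a b e1 unfolding r_def by (intro mult_le_one) auto
  qed
  show ?thesis using PD QFF ineq by blast
qed


end
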